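(* Let $\llbracket\mu\rrbracket$ be a FastPai encryption of $\mu\in\mathbb{Z}_N$ (e.g. the output of the secure comparison protocol), and let $\langle 2\alpha\rangle_0,\langle 2\alpha\rangle_1$ be integers held by $S_0$, $S_1$ respectively with $\langle 2\alpha\rangle_1-\langle 2\alpha\rangle_0=2\alpha$. Run protocol $\mathtt{C2S}$: $S_0$ sends $\llbracket\mu\rrbracket$ to $S_1$, and for $i\in\{0,1\}$, $S_i$ computes $\langle 2\alpha\mu\rangle_i=\mathrm{DDLog}_N(\llbracket\mu\rrbracket^{\langle 2\alpha\rangle_i}\bmod N^2)$. Then $\langle 2\alpha\mu\rangle_1-\langle 2\alpha\mu\rangle_0\equiv 2\alpha\cdot\mu\pmod N$.
   Context: FastPai: for a security parameter $\kappa$, $l(\kappa)=4\kappa$. $N=PQ$ with $P,Q$ primes of $n(\kappa)/2$ bits, $p,q$ odd primes of $l(\kappa)/2$ bits, $p\mid P-1$, $q\mid Q-1$, $P\equiv Q\equiv3\pmod4$, $\gcd(P-1,Q-1)=2$, $\gcd(pq,(P-1)(Q-1)/(4pq))=1$. Private key $\alpha=pq$; $\beta=(P-1)(Q-1)/(4pq)$; $h=-y_0^{2\beta}\bmod N$ for random $y_0\in\mathbb{Z}_N^*$; public key $(N,h)$. $\mathrm{Enc}(m)=(1+N)^m(h^r\bmod N)^N\bmod N^2$, $r$ uniform in $\{0,1\}^{l(\kappa)}$, written $\llbracket m\rrbracket$. Ciphertext exponentiations by (possibly negative) integers are in $\mathbb{Z}_{N^2}^*$. $\mathrm{DDLog}_N(g)=\lfloor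 g/N\rfloor\cdot(g\bmod N)^{-1}\bmod N$ for $g\in[0,N^2)$ with $g\bmod N$ invertible mod $N$. *)

theory Defs
  imports "HOL-Number_Theory.Number_Theory"
begin

definition has_bits :: "nat \<Rightarrow> int \<Rightarrow> bool" where
  "has_bits k x \<longleftrightarrow> 2 ^ (k - 1) \<le> x \<and> x < 2 ^ k"

definition lpar :: "nat \<Rightarrow> nat" where
  "lpar \<kappa> = 4 * \<kappa>"

definition fastpai_primes :: "nat \<Rightarrow> nat \<Rightarrow> int \<Rightarrow> int \<Rightarrow> int \<Rightarrow> int \<Rightarrow> bool" where
  "fastpai_primes \<kappa> n P Q p q \<longleftrightarrow>
     prime P \<and> prime Q \<and> has_bits (n div 2) P \<and> has_bits (n div 2) Q \<and>
     prime p \<and> prime q \<and> odd p \<and> odd q \<and>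
     has_bits (lpar \<kappa> div 2) p \<and> has_bits (lpar \<kappa> div 2) q \<and>
     p dvd P - 1 \<and> q dvd Q - 1 \<and>
     [P = 3] (mod 4) \<and> [Q = 3] (mod 4) \<and>
     gcd (P - 1) (Q - 1) = 2 \<and>
     gcd (p * q) ((P - 1) * (Q - 1) div (4 * p * q)) = 1"

definition fastpai_alpha :: "int \<Rightarrow> int \<Rightarrow> int" where
  "fastpai_alpha p q = p * q"

definition fastpai_beta :: "int \<Rightarrow> int \<Rightarrow> int \<Rightarrow> int \<Rightarrow> int" where
  "fastpai_beta P Q p q = (P - 1) * (Q - 1) div (4 * p * q)"

definition fastpai_h :: "int \<Rightarrow> int \<Rightarrow> int \<Rightarrow> int" where
  "fastpai_h N \<beta> y0 = (- (y0 ^ nat (2 * \<beta>))) mod N"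

definition fastpai_enc :: "int \<Rightarrow> int \<Rightarrow> int \<Rightarrow> nat \<Rightarrow> int" where
  "fastpai_enc N h m r = ((1 + N) ^ nat m * ((h ^ r) mod N) ^ nat N) mod (N ^ 2)"

definition zpow :: "int \<Rightarrow> int \<Rightarrow> int \<Rightarrow> int" where
  "zpow M c e = (if 0 \<le> e then c ^ nat e mod M
                 else (modular_inverse M c) ^ nat (- e) mod M)"

definition DDLog :: "int \<Rightarrow> int \<Rightarrow> int" where
  "DDLog N g = ((g div N) * modular_inverse N (g mod N)) mod N"

end

theory Submission
  imports Defs
begin

lemma fermat_int:
  fixes P y :: int
  assumes "prime P" "coprime y P"
  shows "P dvd y ^ nat (P - 1) - 1"
proof -
  have P1: "P > 1" using assms(1) prime_gt_1_int by blast
  have "residues P" unfolding residues_def using P1 by simp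
  then have "[y ^ totient (nat P) = 1] (mod P)" using residues.euler_theorem assms(2) by blast
  moreover have "prime (nat P)" using assms(1) P1 by (simp add: prime_nat_iff_prime)
  then have "totient (nat P) = nat (P - 1)" using totient_prime P1 by simp
  ultimately show ?thesis by (simp add: cong_iff_dvd_diff)
qed

lemma pow_cong_lin:
  fixes x M :: int
  assumes "M dvd x - 1"
  shows "M^2 dvd x ^ k - (1 + int k * (x - 1))"
proof (induction k)
  case 0
  then show ?case by simp
next
  case (Suc k)
  have sq: "M^2 dvd (x - 1)^2" using assms by (simp add: dvd_power_same)
  have "x ^ Suc k - (1 + int (Suc k) * (x - 1)) = x * (x ^ k - (1 + int k * (x - 1))) + int k * (x - 1)^2"
    by (simp add: algebra_simps power2_eq_square)
  moreover have "M^2 dvd x * (x ^ k - (1 + int k * (x - 1))) + int k * (x - 1)^2"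
    using Suc.IH sq by (simp add: dvd_add)
  ultimately show ?case by simp
qed

lemma ddlog_shift:
  fixes N g0 g1 k :: int
  assumes N1: "N > 1" and cop: "coprime g0 N" and rel: "N^2 dvd g1 - g0 * (1 + k * N)"
  shows "N dvd DDLog N g1 - DDLog N g0 - k"
proof -
  define u where "u = g0 mod N"
  define w where "w = modular_inverse N u"
  have "N dvd N^2" by (simp add: power2_eq_square)
  with rel have r1: "N dvd g1 - g0 * (1 + k * N)" using dvd_trans by blast
  have "g1 - g0 = (g1 - g0 * (1 + k * N)) + N * (g0 * k)" by (simp add: algebra_simps)
  then have "N dvd g1 - g0" using r1 by (metis dvd_add dvd_triv_left)
  then have g1u: "g1 mod N = u" unfolding u_def by (simp add: mod_eq_dvd_iff)
  have cu: "coprime u N" unfolding u_def using cop N1 by simp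
  have uw: "N dvd u * w - 1" unfolding w_def using cong_modular_inverse1[OF cu] by (simp add: cong_iff_dvd_diff)
  define D where "D = g1 div N - g0 div N"
  have e0: "g0 = N * (g0 div N) + u" unfolding u_def by simp
  have e1: "g1 = N * (g1 div N) + u" using g1u by (metis div_mult_mod_eq mult.commute)
  have "g1 - g0 * (1 + k * N) = N * (D - g0 * k)"
    unfolding D_def using e0 e1 by (simp add: algebra_simps)
  with rel have "N * N dvd N * (D - g0 * k)" by (simp add: power2_eq_square)
  then have dD: "N dvd D - g0 * k" using N1 by simp
  have d1: "DDLog N g1 = (g1 div N * w) mod N" unfolding DDLog_def w_def g1u ..
  have d0: "DDLog N g0 = (g0 div N * w) mod N" unfolding DDLog_def w_def u_def ..
  have m1: "N dvd (g1 div N * w) mod N - g1 div N * w" by (metis mod_eq_dvd_iff mod_mod_trivial)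
  have m0: "N dvd (g0 div N * w) mod N - g0 div N * w" by (metis mod_eq_dvd_iff mod_mod_trivial)
  have key: "g1 div N * w - g0 div N * w - k = (D - g0 * k) * w + k * ((g0 - u) * w) + k * (u * w - 1)"
    unfolding D_def by (simp add: algebra_simps)
  have gu: "N dvd g0 - u" using e0 by (metis add_diff_cancel_right' dvd_triv_left)
  have "N dvd g1 div N * w - g0 div N * w - k"
    unfolding key using dD uw gu by (intro dvd_add) (auto simp: dvd_mult dvd_mult2)
  moreover have "DDLog N g1 - DDLog N g0 - k = ((g1 div N * w) mod N - g1 div N * w) - ((g0 div N * w) mod N - g0 div N * w) + (g1 div N * w - g0 div N * w - k)"
    unfolding d1 d0 by simp
  ultimately show ?thesis using m1 m0 by (metis dvd_add dvd_diff)
qed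


lemma zpow_step1:
  fixes M c e :: int
  assumes M1: "M > 1" and cop: "coprime c M"
  shows "M dvd zpow M c e * c - zpow M c (e + 1)"
proof (cases "0 \<le> e")
  case True
  then have "nat (e + 1) = Suc (nat e)" by simp
  then have "zpow M c (e + 1) = (c ^ nat e * c) mod M" using True by (simp add: zpow_def mult.commute)
  moreover have "zpow M c e * c mod M = (c ^ nat e * c) mod M" using True by (simp add: zpow_def mod_mult_left_eq)
  ultimately show ?thesis by (metis mod_eq_dvd_iff mod_mod_trivial)
next
  case False
  define i where "i = modular_inverse M c"
  have ci: "M dvd i * c - 1" unfolding i_def using cong_modular_inverse2[OF cop] by (simp add: cong_iff_dvd_diff)
  define n where "n = nat (- e - 1)"
  have ne: "nat (- e) = Suc n" unfolding n_def using False by simp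
  have z1: "zpow M c (e + 1) = i ^ n mod M"
  proof (cases "e + 1 = 0")
    case True
    then have "n = 0" unfolding n_def by simp
    then show ?thesis using True M1 by (simp add: zpow_def)
  next
    case F2: False
    then have "\<not> 0 \<le> e + 1" using False by simp
    moreover have "- (e + 1) = - e - 1" by simp
    ultimately show ?thesis unfolding zpow_def i_def n_def by presburger
  qed
  have z0: "zpow M c e = i ^ Suc n mod M" using False unfolding zpow_def i_def ne by simp
  have "zpow M c e * c - zpow M c (e + 1) = (i ^ Suc n mod M - i ^ Suc n) * c + i ^ n * (i * c - 1) + (i ^ n - i ^ n mod M)"
    unfolding z0 z1 by (simp add: algebra_simps)
  moreover have "M dvd i ^ Suc n mod M - i ^ Suc n" by (metis mod_eq_dvd_iff mod_mod_trivial)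
  moreover have "M dvd i ^ n - i ^ n mod M" by (metis mod_eq_dvd_iff mod_mod_trivial)
  ultimately show ?thesis using ci by (metis dvd_add dvd_mult dvd_mult2)
qed

lemma zpow_step:
  fixes M c e :: int
  assumes M1: "M > 1" and cop: "coprime c M"
  shows "M dvd zpow M c e * c ^ j - zpow M c (e + int j)"
proof (induction j)
  case 0
  have "zpow M c e mod M = zpow M c e" unfolding zpow_def by simp
  then show ?case by (metis mod_eq_dvd_iff mod_mod_trivial mult_1_right power_0 add_0_right of_nat_0)
next
  case (Suc j)
  have "zpow M c e * c ^ Suc j - zpow M c (e + int (Suc j)) =
        (zpow M c e * c ^ j - zpow M c (e + int j)) * c + (zpow M c (e + int j) * c - zpow M c (e + int j + 1))"
    by (simp add: algebra_simps)
  then show ?case using Suc.IH zpow_step1[OF M1 cop, of "e + int j"] by (metis dvd_add dvd_mult2)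
qed

lemma zpow_coprime:
  fixes M c e :: int
  assumes M1: "M > 1" and cop: "coprime c M"
  shows "coprime (zpow M c e) M"
proof -
  have "coprime (modular_inverse M c) M" using cop by simp
  then show ?thesis using cop M1 unfolding zpow_def by auto
qed


lemma dvd_sub_aux:
  fixes M x y :: int
  assumes "M dvd x - (1 + y)" "M dvd y"
  shows "M dvd x - 1"
proof -
  have "x - 1 = (x - (1 + y)) + y" by simp
  then show ?thesis using assms by (metis dvd_add)
qed

theorem theorem4:
  fixes \<kappa> n :: nat and P Q p q N y0 \<mu> a0 a1 :: int and r :: nat
  assumes keys: "fastpai_primes \<kappa> n P Q p q"
    and N_def: "N = P * Q"
    and y0: "y0 \<in> {0..<N}" "coprime y0 N"
    and r: "r < 2 ^ lpar \<kappa>"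
    and mu: "\<mu> \<in> {0..<N}"
    and shares: "a1 - a0 = 2 * fastpai_alpha p q"
  shows "let h = fastpai_h N (fastpai_beta P Q p q) y0;
             c = fastpai_enc N h \<mu> r;
             d0 = DDLog N (zpow (N ^ 2) c a0);
             d1 = DDLog N (zpow (N ^ 2) c a1)
         in [d1 - d0 = 2 * fastpai_alpha p q * \<mu>] (mod N)"
proof -
  have pP: "prime P" and pQ: "prime Q" and pp: "prime p" and pq: "prime q"
    and op: "odd p" and oq: "odd q" and pdP: "p dvd P - 1" and qdQ: "q dvd Q - 1"
    and P3: "[P = 3] (mod 4)" and Q3: "[Q = 3] (mod 4)" and gPQ: "gcd (P - 1) (Q - 1) = 2"
    using keys unfolding fastpai_primes_def by auto
  have P1: "P > 1" using pP prime_gt_1_int by blast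
  have Q1: "Q > 1" using pQ prime_gt_1_int by blast
  have p1: "p > 1" using pp prime_gt_1_int by blast
  have q1: "q > 1" using pq prime_gt_1_int by blast
  have N1: "N > 1" unfolding N_def using P1 Q1 by (metis less_1_mult)
  have N0: "N \<noteq> 0" using N1 by simp
  have PneQ: "P \<noteq> Q"
  proof
    assume "P = Q"
    then have "P - 1 = 2" using gPQ P1 by simp
    then have "p dvd 2" using pdP by simp
    then have "p \<le> 2" by (simp add: zdvd_imp_le)
    then have "p = 2" using p1 by simp
    then show False using op by simp
  qed
  have cPQ: "coprime P Q" using primes_coprime[OF pP pQ PneQ] .
  have eP: "2 dvd P - 1" using P3 unfolding cong_def by presburger
  have eQ: "2 dvd Q - 1" using Q3 unfolding cong_def by presburger
  have c2p: "coprime 2 p" using op by simp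
  have c2q: "coprime 2 q" using oq by simp
  have d2p: "2 * p dvd P - 1" using divides_mult[OF eP pdP c2p] .
  have d2q: "2 * q dvd Q - 1" using divides_mult[OF eQ qdQ c2q] .
  have d4: "(2 * p) * (2 * q) dvd (P - 1) * (Q - 1)" using mult_dvd_mono[OF d2p d2q] .
  define \<alpha> where "\<alpha> = fastpai_alpha p q"
  define \<beta> where "\<beta> = fastpai_beta P Q p q"
  have al: "\<alpha> = p * q" unfolding \<alpha>_def fastpai_alpha_def ..
  have apos: "\<alpha> > 0" unfolding al using p1 q1 by simp
  have be: "4 * \<alpha> * \<beta> = (P - 1) * (Q - 1)"
  proof -
    have "(2 * p) * (2 * q) = 4 * p * q" by simp
    then have d4': "4 * p * q dvd (P - 1) * (Q - 1)" using d4 by metis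
    have "4 * \<alpha> * \<beta> = 4 * p * q * ((P - 1) * (Q - 1) div (4 * p * q))"
      unfolding \<beta>_def fastpai_beta_def al by (simp add: mult.assoc)
    also have "\<dots> = (P - 1) * (Q - 1)" using d4' by simp
    finally show ?thesis .
  qed
  have bpos: "\<beta> \<ge> 0"
  proof -
    have "(P - 1) * (Q - 1) > 0" using P1 Q1 by simp
    then have "4 * \<alpha> * \<beta> > 0" using be by simp
    then show ?thesis using apos by (simp add: zero_less_mult_iff)
  qed
  define K where "K = nat (2 * \<alpha>)"
  define b where "b = nat (2 * \<beta>)"
  define E where "E = nat (P - 1) * nat (Q - 1)"
  have KE: "b * K = E"
  proof -
    have "int (b * K) = 4 * \<alpha> * \<beta>" unfolding b_def K_def using apos bpos by simp
    also have "\<dots> = int E" unfolding be E_def using P1 Q1 by simp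
    finally show ?thesis by (simp only: of_nat_eq_iff)
  qed
  have evK: "even K" unfolding K_def using apos by (simp add: even_nat_iff)
  have cyP: "coprime y0 P" using y0(2) unfolding N_def by simp
  have cyQ: "coprime y0 Q" using y0(2) unfolding N_def by simp
  have fP: "[y0 ^ nat (P - 1) = 1] (mod P)" using fermat_int[OF pP cyP] by (simp add: cong_iff_dvd_diff)
  have fQ: "[y0 ^ nat (Q - 1) = 1] (mod Q)" using fermat_int[OF pQ cyQ] by (simp add: cong_iff_dvd_diff)
  have "[(y0 ^ nat (P - 1)) ^ nat (Q - 1) = 1] (mod P)" using cong_pow[OF fP, of "nat (Q - 1)"] by simp
  then have EP: "P dvd y0 ^ E - 1" unfolding E_def by (simp add: power_mult cong_iff_dvd_diff)
  have "[(y0 ^ nat (Q - 1)) ^ nat (P - 1) = 1] (mod Q)" using cong_pow[OF fQ, of "nat (P - 1)"] by simp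
  then have EQ: "Q dvd y0 ^ E - 1" unfolding E_def by (simp add: power_mult[symmetric] mult.commute cong_iff_dvd_diff)
  have EN: "[y0 ^ E = 1] (mod N)" using divides_mult[OF EP EQ cPQ] unfolding N_def by (simp add: cong_iff_dvd_diff)
  define h where "h = fastpai_h N \<beta> y0"
  have h_eq: "h = (- (y0 ^ b)) mod N" unfolding h_def fastpai_h_def b_def ..
  have "[h = - (y0 ^ b)] (mod N)" unfolding h_eq cong_def by simp
  then have "[h ^ K = (- (y0 ^ b)) ^ K] (mod N)" by (rule cong_pow)
  moreover have "(- (y0 ^ b)) ^ K = y0 ^ E" using evK KE by (simp add: power_mult[symmetric])
  ultimately have hK: "[h ^ K = 1] (mod N)" using EN cong_trans by metis
  define s where "s = h ^ r mod N"
  have "[s = h ^ r] (mod N)" unfolding s_def cong_def by simp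
  then have "[s ^ K = (h ^ r) ^ K] (mod N)" by (rule cong_pow)
  moreover have "(h ^ r) ^ K = (h ^ K) ^ r" by (simp add: power_mult[symmetric] mult.commute)
  moreover have "[(h ^ K) ^ r = 1] (mod N)" using cong_pow[OF hK, of r] by simp
  ultimately have sK: "[s ^ K = 1] (mod N)" using cong_trans by metis
  have sK': "N dvd s ^ K - 1" using sK by (simp add: cong_iff_dvd_diff)
  have A: "N ^ 2 dvd (s ^ K) ^ nat N - (1 + int (nat N) * (s ^ K - 1))"
    using pow_cong_lin[OF sK'] .
  have nN: "int (nat N) = N" using N1 by simp
  have B: "N ^ 2 dvd int (nat N) * (s ^ K - 1)"
    unfolding nN power2_eq_square using mult_dvd_mono[OF dvd_refl sK'] .
  have sKN: "N ^ 2 dvd (s ^ K) ^ nat N - 1" using dvd_sub_aux[OF A B] .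
  define m where "m = nat \<mu> * K"
  have mk: "int m = 2 * \<alpha> * \<mu>" unfolding m_def K_def using mu apos by simp
  have "N dvd (1 + N) - 1" by simp
  then have "N ^ 2 dvd (1 + N) ^ m - (1 + int m * ((1 + N) - 1))" by (rule pow_cong_lin)
  then have onep: "N ^ 2 dvd (1 + N) ^ m - (1 + 2 * \<alpha> * \<mu> * N)" by (simp only: mk add_diff_cancel_left')
  define c where "c = fastpai_enc N h \<mu> r"
  have c_eq: "c = ((1 + N) ^ nat \<mu> * s ^ nat N) mod N ^ 2" unfolding c_def fastpai_enc_def s_def ..
  have "[c ^ K = ((1 + N) ^ nat \<mu> * s ^ nat N) ^ K] (mod N ^ 2)"
    unfolding c_eq by (rule cong_pow) (simp add: cong_def)
  moreover have "((1 + N) ^ nat \<mu> * s ^ nat N) ^ K = (1 + N) ^ m * (s ^ K) ^ nat N"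
    unfolding m_def by (simp add: power_mult_distrib power_mult[symmetric] mult.commute)
  moreover have "[(1 + N) ^ m * (s ^ K) ^ nat N = (1 + 2 * \<alpha> * \<mu> * N) * 1] (mod N ^ 2)"
    using onep sKN by (intro cong_mult) (simp_all add: cong_iff_dvd_diff)
  ultimately have cK: "[c ^ K = 1 + 2 * \<alpha> * \<mu> * N] (mod N ^ 2)" using cong_trans by fastforce
  have ch: "coprime h N" unfolding h_eq using y0(2) N0 by simp
  have cs: "coprime s N" unfolding s_def using ch N0 by simp
  have c1N: "coprime (1 + N) N" using coprime_add_one_left[of N] by (simp only: add.commute)
  have "coprime ((1 + N) ^ nat \<mu> * s ^ nat N) N" using cs c1N by simp
  then have cc0: "coprime ((1 + N) ^ nat \<mu> * s ^ nat N) (N ^ 2)" by simp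
  have N2z: "N ^ 2 \<noteq> 0" using N0 by simp
  have cc: "coprime c (N ^ 2)" unfolding c_eq using cc0 coprime_mod_left_iff[OF N2z] by blast
  have N21: "N ^ 2 > 1" using N1 by (simp add: one_less_power)
  define g0 where "g0 = zpow (N ^ 2) c a0"
  define g1 where "g1 = zpow (N ^ 2) c a1"
  have a1e: "a1 = a0 + int K" unfolding K_def using shares apos \<alpha>_def by simp
  have st: "N ^ 2 dvd g0 * c ^ K - g1" unfolding g0_def g1_def a1e using zpow_step[OF N21 cc] .
  have cg0: "coprime g0 N" unfolding g0_def using zpow_coprime[OF N21 cc, of a0] by simp
  have "N ^ 2 dvd c ^ K - (1 + 2 * \<alpha> * \<mu> * N)" using cK unfolding cong_iff_dvd_diff .
  then have gc: "N ^ 2 dvd g0 * (c ^ K - (1 + 2 * \<alpha> * \<mu> * N))" by (rule dvd_mult)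
  have eqr: "g1 - g0 * (1 + (2 * \<alpha> * \<mu>) * N) = g0 * (c ^ K - (1 + 2 * \<alpha> * \<mu> * N)) - (g0 * c ^ K - g1)"
    by (simp add: algebra_simps)
  have rel: "N ^ 2 dvd g1 - g0 * (1 + (2 * \<alpha> * \<mu>) * N)" unfolding eqr using dvd_diff[OF gc st] .
  have fin: "N dvd DDLog N g1 - DDLog N g0 - 2 * \<alpha> * \<mu>" using ddlog_shift[OF N1 cg0 rel] .
  show ?thesis using fin unfolding Let_def g0_def g1_def c_def h_def \<beta>_def \<alpha>_def cong_iff_dvd_diff .
qed

end
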